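(* Let $k\ge1$, $0\le r<k$ and $n\ge0$ be integers. Then $$\sum_{j=0}^n(-1)^{n-j}\begin{bmatrix} n+r\\ n-j\end{bmatrix}_q q^{(k-1)\left(\binom{n}{2}-\binom{j}{2}\right)}F^{(k)}_{kj+r}(x;q)=x^{n+r}F^{(k)}_{(k-1)n}(x;q).$$
   Context: Here $q$ is an indeterminate. For integers $m\ge0$ and $j$, $\begin{bmatrix} m\\ j\end{bmatrix}_q=\frac{(1-q^m)(1-q^{m-1})\cdots(1-q^{m-j+1})}{(1-q)(1-q^2)\cdots(1-q^j)}$ for $0\le j\le m$ and $0$ otherwise. For an integer $k\ge1$, the $q$-Fibonacci polynomials $F^{(k)}_n(x;q)$ ($n\ge0$) are defined by $F^{(k)}_n(x;q)=x^n$ for $0\le n<k$ and $F^{(k)}_{n+k}(x;q)=xF^{(k)}_{n+k-1}(x;q)+q^nF^{(k)}_n(x;q)$ for $n\ge0$. *)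

theory Defs
  imports "HOL-Computational_Algebra.Polynomial"
begin

text \<open>We work in the polynomial ring rat[x][q]: the outer variable is q and the
coefficients are polynomials in x.\<close>

type_synonym qx = "rat poly poly"

definition qvar :: qx where "qvar = [:0, 1:]"
definition xvar :: qx where "xvar = [:[:0, 1:]:]"

text \<open>Gaussian binomial, defined as the quotient of the two products in the
polynomial ring (the division is exact).\<close>
definition qbinom :: "nat \<Rightarrow> int \<Rightarrow> qx" where
  "qbinom m j = (if 0 \<le> j \<and> j \<le> int m then
     (\<Prod>i<nat j. 1 - qvar ^ (m - i)) div (\<Prod>i=1..nat j. 1 - qvar ^ i)
   else 0)"

fun qfib :: "nat \<Rightarrow> nat \<Rightarrow> qx" where
  "qfib k n = (if n < k \<or> k = 0 then xvar ^ n
     else xvar * qfib k (n - 1) + qvar ^ (n - k) * qfib k (n - k))"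

end

theory Submission
  imports Defs
begin

declare qfib.simps[simp del]

fun qb :: "nat \<Rightarrow> nat \<Rightarrow> qx" where
  "qb a 0 = 1"
| "qb 0 (Suc i) = 0"
| "qb (Suc a) (Suc i) = qvar ^ (a - i) * qb a i + qb a (Suc i)"

lemma qb_zero: "a < i \<Longrightarrow> qb a i = 0"
proof (induction a i rule: qb.induct)
  case (3 a i)
  then show ?case by simp
qed auto

lemma qb_prod:
  "qb a i * (\<Prod>l=1..i. 1 - qvar ^ l) = (\<Prod>l<i. 1 - qvar ^ (a - l))"
proof (induction a i rule: qb.induct)
  case (1 a)
  then show ?case by simp
next
  case (2 i)
  have "(\<Prod>l<Suc i. 1 - qvar ^ (0 - l)) = 0"
    by (rule prod_zero) auto
  then show ?case by simp
next
  case (3 a i)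
  define P where "P = (\<Prod>l=1..i. 1 - qvar ^ l)"
  define R where "R = (\<Prod>l<i. 1 - qvar ^ (a - l))"
  have P1: "(\<Prod>l=1..Suc i. 1 - qvar ^ l) = P * (1 - qvar ^ Suc i)"
    unfolding P_def by (simp add: prod.nat_ivl_Suc')
  have R1: "(\<Prod>l<Suc i. 1 - qvar ^ (a - l)) = R * (1 - qvar ^ (a - i))"
    unfolding R_def by simp
  have R2: "(\<Prod>l<Suc i. 1 - qvar ^ (Suc a - l)) = (1 - qvar ^ Suc a) * R"
    unfolding R_def prod.lessThan_Suc_shift by simp
  have IH1: "qb a i * P = R" using 3(1) unfolding P_def R_def .
  have IH2: "qb a (Suc i) * (P * (1 - qvar ^ Suc i)) = R * (1 - qvar ^ (a - i))"
    using 3(2) unfolding P1[symmetric] R1[symmetric] .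
  show ?case
  proof (cases "i \<le> a")
    case True
    have e: "qvar ^ (a - i) * qvar ^ Suc i = (qvar ^ Suc a :: qx)"
      using True by (simp add: power_add[symmetric])
    have e2: "qvar ^ i * qvar ^ (a - i) = (qvar ^ a :: qx)"
      using True by (simp add: power_add[symmetric])
    have "qb (Suc a) (Suc i) * (\<Prod>l=1..Suc i. 1 - qvar ^ l)
        = qvar ^ (a - i) * (qb a i * P) * (1 - qvar ^ Suc i) + qb a (Suc i) * (P * (1 - qvar ^ Suc i))"
      unfolding P1 by (simp add: algebra_simps)
    also have "\<dots> = R * (qvar ^ (a - i) - qvar ^ (a - i) * qvar ^ Suc i + 1 - qvar ^ (a - i))"
      unfolding IH1 IH2 by (simp add: algebra_simps)
    also have "\<dots> = (1 - qvar ^ Suc a) * R" by (simp add: e e2 algebra_simps)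
    finally show ?thesis using R2 by simp
  next
    case False
    have "R = 0" unfolding R_def using False by (intro prod_zero) (auto intro!: bexI[of _ a])
    moreover have "qb a i = 0" "qb a (Suc i) = 0" using False by (auto intro: qb_zero)
    moreover have "qb (Suc a) (Suc i) = 0" using False by (intro qb_zero) simp
    ultimately show ?thesis using R2 by simp
  qed
qed

lemma qvar_pow_ne: "l \<ge> 1 \<Longrightarrow> (1 - qvar ^ l :: qx) \<noteq> 0"
proof
  assume "l \<ge> 1" "(1 - qvar ^ l :: qx) = 0"
  then have "coeff (1 - qvar ^ l :: qx) l = 0" by simp
  moreover have "qvar ^ l = (monom 1 l :: qx)" unfolding qvar_def
    by (simp add: monom_altdef)
  ultimately show False using \<open>l \<ge> 1\<close> by (simp add: coeff_monom)
qed

lemma qbinom_qb: "qbinom m (int j) = (if j \<le> m then qb m j else 0)"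
proof -
  have "\<forall>l\<in>{1..j}. (1 - qvar ^ l :: qx) \<noteq> 0"
    by (intro ballI qvar_pow_ne) auto
  then have P: "(\<Prod>l=1..j. 1 - qvar ^ l :: qx) \<noteq> 0"
    by (metis prod_zero_iff finite_atLeastAtMost)
  show ?thesis
    unfolding qbinom_def using qb_prod[of m j, symmetric] P by simp
qed

lemma qfib_small: "n < k \<Longrightarrow> qfib k n = xvar ^ n"
  by (subst qfib.simps) simp

lemma qfib_rec: "k \<ge> 1 \<Longrightarrow> qfib k (n + k) = xvar * qfib k (n + k - 1) + qvar ^ n * qfib k n"
  by (subst qfib.simps) simp

definition E :: "nat \<Rightarrow> nat \<Rightarrow> nat \<Rightarrow> nat \<Rightarrow> nat" where
  "E k N j e = (k - 1) * ((N choose 2) - (j choose 2)) + e * (N - j)"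

definition G :: "nat \<Rightarrow> nat \<Rightarrow> nat \<Rightarrow> nat \<Rightarrow> nat \<Rightarrow> qx" where
  "G k N a e r = (\<Sum>j=0..N. (-1) ^ (N - j) * qb a (N - j) * qvar ^ (E k N j e) * qfib k (k * j + r))"

lemma G_pascal:
  "G k (Suc n) (Suc a) e r = G k (Suc n) a e r
     + (\<Sum>j=0..n. (-1) ^ Suc (n - j) * qb a (n - j) * qvar ^ (a - (n - j) + E k (Suc n) j e) * qfib k (k * j + r))"
proof -
  have "(\<Sum>j=0..n. (-1) ^ (Suc n - j) * qb (Suc a) (Suc n - j) * qvar ^ (E k (Suc n) j e) * qfib k (k * j + r))
      = (\<Sum>j=0..n. (-1) ^ (Suc n - j) * qb a (Suc n - j) * qvar ^ (E k (Suc n) j e) * qfib k (k * j + r))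
      + (\<Sum>j=0..n. (-1) ^ Suc (n - j) * qb a (n - j) * qvar ^ (a - (n - j) + E k (Suc n) j e) * qfib k (k * j + r))"
    unfolding sum.distrib[symmetric]
  proof (rule sum.cong[OF refl])
    fix j assume "j \<in> {0..n}"
    then have j: "Suc n - j = Suc (n - j)" by auto
    show "(-1) ^ (Suc n - j) * qb (Suc a) (Suc n - j) * qvar ^ (E k (Suc n) j e) * qfib k (k * j + r)
      = (-1) ^ (Suc n - j) * qb a (Suc n - j) * qvar ^ (E k (Suc n) j e) * qfib k (k * j + r)
      + (-1) ^ Suc (n - j) * qb a (n - j) * qvar ^ (a - (n - j) + E k (Suc n) j e) * qfib k (k * j + r)"
      unfolding j by (simp add: power_add algebra_simps)
  qed
  then show ?thesis unfolding G_def sum.atLeast0_atMost_Suc by simp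
qed

lemma G_shift:
  "G k (Suc n) a e r = (-1) ^ Suc n * qb a (Suc n) * qvar ^ (E k (Suc n) 0 e) * qfib k r
     + (\<Sum>j=0..n. (-1) ^ (n - j) * qb a (n - j) * qvar ^ (E k (Suc n) (Suc j) e) * qfib k (k * j + r + k))"
  unfolding G_def sum.atLeast0_atMost_Suc_shift by (simp add: algebra_simps)

lemma choose2_Suc: "Suc n choose 2 = (n choose 2) + n"
  by (simp add: numeral_2_eq_2)

lemma E_cancel:
  assumes "k \<ge> 1" "j \<le> n" "n - j \<le> a" "a = n + r - e" "e \<le> n + r"
  shows "a - (n - j) + E k (Suc n) j e = E k (Suc n) (Suc j) e + (k * j + r)"
proof -
  obtain k' where k: "k = Suc k'" using assms(1) by (cases k) auto
  define D where "D = (n choose 2) - (j choose 2)"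
  have jn: "j choose 2 \<le> n choose 2" using assms(2) by (rule binomial_right_mono)
  have d1: "(Suc n choose 2) - (j choose 2) = D + n" unfolding D_def choose2_Suc using jn by simp
  have d2: "(Suc n choose 2) - (Suc j choose 2) = D + (n - j)" unfolding D_def choose2_Suc using jn assms(2) by simp
  have "D + n = D + (n - j) + j" using assms(2) by simp
  then have m1: "k' * (D + n) = k' * (D + (n - j)) + k' * j" by (simp only: distrib_left)
  have m2: "e * (Suc n - j) = e * (n - j) + e" using assms(2) by (simp add: Suc_diff_le)
  show ?thesis unfolding E_def d1 d2 k diff_Suc_1 diff_Suc_Suc m1 m2 mult_Suc using assms(2-5) by linarith
qed

lemma G_step:
  assumes "k \<ge> 1" "e \<le> n + r" "a = n + r - e"
  shows "G k (Suc n) (Suc a) e r = (-1) ^ Suc n * qb a (Suc n) * qvar ^ (E k (Suc n) 0 e) * qfib k r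
     + xvar * (\<Sum>j=0..n. (-1) ^ (n - j) * qb a (n - j) * qvar ^ (E k (Suc n) (Suc j) e) * qfib k (k * j + r + k - 1))"
proof -
  have key: "(-1) ^ Suc (n - j) * qb a (n - j) * qvar ^ (a - (n - j) + E k (Suc n) j e) * qfib k (k * j + r)
     + (-1) ^ (n - j) * qb a (n - j) * qvar ^ (E k (Suc n) (Suc j) e) * qfib k (k * j + r + k)
     = xvar * ((-1) ^ (n - j) * qb a (n - j) * qvar ^ (E k (Suc n) (Suc j) e) * qfib k (k * j + r + k - 1))"
    if j: "j \<in> {0..n}" for j
  proof (cases "n - j \<le> a")
    case True
    have ex: "a - (n - j) + E k (Suc n) j e = E k (Suc n) (Suc j) e + (k * j + r)"
      using E_cancel[OF assms(1) _ True assms(3,2)] j by simp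
    show ?thesis unfolding ex qfib_rec[OF assms(1), of "k * j + r"]
      by (simp add: power_add algebra_simps)
  next
    case False
    then show ?thesis by (simp add: qb_zero)
  qed
  have "G k (Suc n) (Suc a) e r = (-1) ^ Suc n * qb a (Suc n) * qvar ^ (E k (Suc n) 0 e) * qfib k r
     + ((\<Sum>j=0..n. (-1) ^ (n - j) * qb a (n - j) * qvar ^ (E k (Suc n) (Suc j) e) * qfib k (k * j + r + k))
     + (\<Sum>j=0..n. (-1) ^ Suc (n - j) * qb a (n - j) * qvar ^ (a - (n - j) + E k (Suc n) j e) * qfib k (k * j + r)))"
    unfolding G_pascal unfolding G_shift[of k n a e r] by (simp add: algebra_simps)
  also have "(\<Sum>j=0..n. (-1) ^ (n - j) * qb a (n - j) * qvar ^ (E k (Suc n) (Suc j) e) * qfib k (k * j + r + k))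
     + (\<Sum>j=0..n. (-1) ^ Suc (n - j) * qb a (n - j) * qvar ^ (a - (n - j) + E k (Suc n) j e) * qfib k (k * j + r))
     = xvar * (\<Sum>j=0..n. (-1) ^ (n - j) * qb a (n - j) * qvar ^ (E k (Suc n) (Suc j) e) * qfib k (k * j + r + k - 1))"
    unfolding sum.distrib[symmetric] sum_distrib_left
    by (rule sum.cong[OF refl]) (subst key[symmetric], simp_all add: algebra_simps)
  finally show ?thesis .
qed

lemma E_shift:
  assumes "k \<ge> 1" "j \<le> n"
  shows "E k (Suc n) (Suc j) e = E k n j (e + k - 1)"
proof -
  obtain k' where k: "k = Suc k'" using assms(1) by (cases k) auto
  have jn: "j choose 2 \<le> n choose 2" using assms(2) by (rule binomial_right_mono)
  have d2: "(Suc n choose 2) - (Suc j choose 2) = ((n choose 2) - (j choose 2)) + (n - j)"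
    unfolding choose2_Suc using jn assms(2) by simp
  show ?thesis unfolding E_def d2 k by (simp add: algebra_simps)
qed

lemma G_top: "G k N 0 e r = qfib k (k * N + r)"
proof (cases N)
  case 0
  then show ?thesis by (simp add: G_def E_def)
next
  case (Suc n)
  have "(\<Sum>j=0..n. (-1) ^ (Suc n - j) * qb 0 (Suc n - j) * qvar ^ (E k (Suc n) j e) * qfib k (k * j + r)) = 0"
    by (rule sum.neutral) (auto simp: Suc_diff_le)
  then show ?thesis unfolding Suc G_def sum.atLeast0_atMost_Suc by (simp add: E_def)
qed

lemma G_main:
  assumes k: "k \<ge> 1"
  shows "r < k \<Longrightarrow> e \<le> N + r \<Longrightarrow> G k N (N + r - e) e r = xvar ^ (N + r - e) * qfib k ((k - 1) * N + e)"
proof (induction N arbitrary: r e)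
  case 0
  then show ?case
    by (simp add: G_def E_def qfib_small power_add[symmetric])
next
  case (Suc n)
  have inner: "\<And>e. r < k \<Longrightarrow> e \<le> Suc n + r \<Longrightarrow>
     G k (Suc n) (Suc n + r - e) e r = xvar ^ (Suc n + r - e) * qfib k ((k - 1) * Suc n + e)" for r
  proof (induction r)
    case 0
    show ?case
    proof (cases "e = Suc n")
      case True
      have "(k - 1) * Suc n + e = k * Suc n" using True k by (cases k) auto
      then show ?thesis using True by (simp add: G_top)
    next
      case False
      define a where "a = n - e"
      have ea: "e \<le> n" using 0 False by simp
      have sa: "Suc n + 0 - e = Suc a" using ea a_def by simp
      have q0: "qb a (Suc n) = 0" using a_def by (intro qb_zero) simp
      have W: "(\<Sum>j=0..n. (-1) ^ (n - j) * qb a (n - j) * qvar ^ (E k (Suc n) (Suc j) e) * qfib k (k * j + 0 + k - 1))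
          = G k n (n + (k - 1) - (e + k - 1)) (e + k - 1) (k - 1)"
        unfolding G_def
      proof (rule sum.cong[OF refl])
        fix j assume "j \<in> {0..n}"
        then have "j \<le> n" by simp
        moreover have "n + (k - 1) - (e + k - 1) = a" using a_def k by simp
        moreover have "k * j + 0 + k - 1 = k * j + (k - 1)" using k by simp
        ultimately show "(-1) ^ (n - j) * qb a (n - j) * qvar ^ (E k (Suc n) (Suc j) e) * qfib k (k * j + 0 + k - 1)
          = (-1) ^ (n - j) * qb (n + (k - 1) - (e + k - 1)) (n - j) * qvar ^ (E k n j (e + k - 1)) * qfib k (k * j + (k - 1))"
          using E_shift[OF k] by simp
      qed
      have IH: "G k n (n + (k - 1) - (e + k - 1)) (e + k - 1) (k - 1) = xvar ^ (n + (k - 1) - (e + k - 1)) * qfib k ((k - 1) * n + (e + k - 1))"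
        using Suc.IH[of "k - 1" "e + k - 1"] k ea by simp
      have ar: "n + (k - 1) - (e + k - 1) = a" "(k - 1) * n + (e + k - 1) = (k - 1) * Suc n + e"
        using a_def k ea by (cases k; simp add: algebra_simps)+
      have "G k (Suc n) (Suc a) e 0 = xvar * (xvar ^ a * qfib k ((k - 1) * Suc n + e))"
        using G_step[OF k, of e n 0 a] ea a_def q0 W IH unfolding ar by simp
      then show ?thesis unfolding sa by simp
    qed
  next
    case (Suc r')
    show ?case
    proof (cases "e = Suc n + Suc r'")
      case True
      have eq: "(k - 1) * Suc n + e = k * Suc n + Suc r'" using True k by (cases k) auto
      have h: "Suc n + Suc r' - e = 0" by (simp add: True)
      show ?thesis unfolding h G_top eq by simp
    next
      case False
      define a where "a = n + Suc r' - e"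
      have ea: "e \<le> n + Suc r'" using Suc.prems False by simp
      have sa: "Suc n + Suc r' - e = Suc a" using ea a_def by simp
      define c where "c = (-1) ^ Suc n * qb a (Suc n) * qvar ^ (E k (Suc n) 0 e)"
      define W where "W = (\<Sum>j=0..n. (-1) ^ (n - j) * qb a (n - j) * qvar ^ (E k (Suc n) (Suc j) e) * qfib k (k * j + Suc r' + k - 1))"
      have sh: "G k (Suc n) a e r' = c * qfib k r' + W"
        unfolding G_shift[of k n a e r'] c_def W_def by simp
      have st: "G k (Suc n) (Suc a) e (Suc r') = c * qfib k (Suc r') + xvar * W"
        unfolding c_def W_def using G_step[OF k, of e n "Suc r'" a] ea a_def by simp
      have fr: "qfib k (Suc r') = xvar * qfib k r'" using Suc.prems by (simp add: qfib_small)
      have IH: "G k (Suc n) a e r' = xvar ^ a * qfib k ((k - 1) * Suc n + e)"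
        using Suc.IH[of e] Suc.prems ea a_def False by simp
      have "G k (Suc n) (Suc a) e (Suc r') = xvar * G k (Suc n) a e r'"
        unfolding st sh fr by (simp add: algebra_simps)
      then show ?thesis unfolding sa IH by simp
    qed
  qed
  show ?case using inner Suc.prems by blast
qed

theorem mainTheorem17:
  fixes k r n :: nat
  assumes "k \<ge> 1" and "r < k"
  shows "(\<Sum>j=0..n. (-1) ^ (n - j) * qbinom (n + r) (int n - int j)
            * qvar ^ ((k - 1) * ((n choose 2) - (j choose 2))) * qfib k (k * j + r))
         = xvar ^ (n + r) * qfib k ((k - 1) * n)"
proof -
  have "(\<Sum>j=0..n. (-1) ^ (n - j) * qbinom (n + r) (int n - int j)
            * qvar ^ ((k - 1) * ((n choose 2) - (j choose 2))) * qfib k (k * j + r))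
       = G k n (n + r - 0) 0 r"
    unfolding G_def
  proof (rule sum.cong[OF refl])
    fix j assume "j \<in> {0..n}"
    then have j: "j \<le> n" by simp
    then have eq: "int n - int j = int (n - j)" by simp
    have "qbinom (n + r) (int n - int j) = qb (n + r) (n - j)" unfolding eq qbinom_qb using j by simp
    then show "(-1) ^ (n - j) * qbinom (n + r) (int n - int j)
            * qvar ^ ((k - 1) * ((n choose 2) - (j choose 2))) * qfib k (k * j + r)
       = (-1) ^ (n - j) * qb (n + r - 0) (n - j) * qvar ^ (E k n j 0) * qfib k (k * j + r)"
      by (simp add: E_def)
  qed
  also have "\<dots> = xvar ^ (n + r - 0) * qfib k ((k - 1) * n + 0)"
    by (rule G_main[OF assms(1) assms(2)]) simp
  finally show ?thesis by simp
qed

end
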